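(* Let $E\in\mathbb R$ and $\rho:[0,\infty)\to[0,\infty)$ with $\sum_{n\in\mathfrak T}\rho(|n|)^2<\infty$. (a) Suppose the subgroup $\{\xi(m):m\in\mathfrak T\}\subset\mathbb R$ is dense. If $E-H_{k_0}$ is invertible for some $k_0\in\mathbb R$, then $E-H_k$ is invertible for every $k\in\mathbb R$. If moreover $|(E-H_{k_0})^{-1}(m,n)|\le\rho(|m-n|)$ for all $m,n$, then $|(E-H_k)^{-1}(m,n)|\le\rho(|m-n|)$ for all $k,m,n$. (b) Suppose the subgroup is discrete, i.e. $2\tau_0:=\inf_{m\in\mathfrak T\setminus\{0\}}|\xi(m)|>0$. Let $m_0\in\mathfrak T$, $k_{m_0}=-\xi(m_0)/2$, $\mathcal J(m_0)=(k_{m_0}-\tau_0,k_{m_0}+\tau_0]$. If $E-H_k$ is invertible for every $k\in\mathcal J(m_0)$, then $E-H_k$ is invertible for every $k\in\mathbb R$. If moreover $|(E-H_k)^{-1}(m,n)|\le\rho(|m-n|)$ for all $m,n$ and all $k\in\mathcal J(m_0)$, then this bound holds for all $k\in\mathbb R$ and all $m,n$.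
   Context: $(\mathfrak T,+)$ is an Abelian group with $|\cdot|:\mathfrak T\to[0,\infty)$, $|m|=0$ iff $m=0$, $|m+n|\le|m|+|n|$, $|B(R)|\le CR^\nu$ for $R\ge1$ ($B(R)=\{m:|m|\le R\}$, $C,\nu>1$). $\xi:\mathfrak T\to\mathbb R$ is additive. $c:\mathfrak T\to\mathbb C$ satisfies $|c(n)|\le\exp(-\kappa_0|n|^{\alpha_0})$ ($0<\kappa_0,\alpha_0\le1$) and $c(-n)=\overline{c(n)}$. Fix $\lambda>0$, $\varepsilon\in\mathbb R$. For $k\in\mathbb R$, $H_k$ is the self-adjoint operator on $\ell^2(\mathfrak T)$ given by the matrix $H_k(n,n)=\lambda^{-1}(\xi(n)+k)^2$, $H_k(n,m)=\varepsilon\lambda^{-1}c(n-m)$ for $m\ne n$, with domain $\{f:\sum_n(\xi(n)+k)^4|f(n)|^2<\infty\}$ (the off-diagonal part is bounded). $(E-H_k)^{-1}(m,n)$ denotes the matrix elements of the inverse in the standard basis. *)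

theory Defs
  imports "HOL-Analysis.Analysis"
begin

definition l2 :: "('a \<Rightarrow> complex) set" where
  "l2 = {f. (\<lambda>n. (norm (f n))^2) summable_on UNIV}"

definition l2norm :: "('a \<Rightarrow> complex) \<Rightarrow> real" where
  "l2norm f = sqrt (\<Sum>\<^sub>\<infinity>n. (norm (f n))^2)"

definition Hdom :: "('a \<Rightarrow> real) \<Rightarrow> real \<Rightarrow> ('a \<Rightarrow> complex) set" where
  "Hdom xi k = {f \<in> l2. (\<lambda>n. (xi n + k)^4 * (norm (f n))^2) summable_on UNIV}"

definition Hop :: "real \<Rightarrow> real \<Rightarrow> ('a::ab_group_add \<Rightarrow> complex) \<Rightarrow> ('a \<Rightarrow> real) \<Rightarrow> real
    \<Rightarrow> ('a \<Rightarrow> complex) \<Rightarrow> ('a \<Rightarrow> complex)" where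
  "Hop lam eps c xi k f = (\<lambda>n. complex_of_real ((xi n + k)^2 / lam) * f n
      + complex_of_real (eps / lam) * (\<Sum>\<^sub>\<infinity>m\<in>UNIV - {n}. c (n - m) * f m))"

definition delta :: "'a \<Rightarrow> 'a \<Rightarrow> complex" where
  "delta n = (\<lambda>m. if m = n then 1 else 0)"

definition is_inverse_of_EmH ::
  "real \<Rightarrow> real \<Rightarrow> ('a::ab_group_add \<Rightarrow> complex) \<Rightarrow> ('a \<Rightarrow> real) \<Rightarrow> real \<Rightarrow> real
     \<Rightarrow> (('a \<Rightarrow> complex) \<Rightarrow> ('a \<Rightarrow> complex)) \<Rightarrow> bool" where
  "is_inverse_of_EmH lam eps c xi E k G \<longleftrightarrow>
     (\<forall>f\<in>l2. G f \<in> Hdom xi k \<and>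
        (\<lambda>n. complex_of_real E * G f n - Hop lam eps c xi k (G f) n) = f) \<and>
     (\<forall>g\<in>Hdom xi k. G (\<lambda>n. complex_of_real E * g n - Hop lam eps c xi k g n) = g) \<and>
     (\<exists>B. \<forall>f\<in>l2. l2norm (G f) \<le> B * l2norm f)"

definition EmH_invertible ::
  "real \<Rightarrow> real \<Rightarrow> ('a::ab_group_add \<Rightarrow> complex) \<Rightarrow> ('a \<Rightarrow> real) \<Rightarrow> real \<Rightarrow> real \<Rightarrow> bool" where
  "EmH_invertible lam eps c xi E k \<longleftrightarrow> (\<exists>G. is_inverse_of_EmH lam eps c xi E k G)"

definition inv_bound ::
  "('a::ab_group_add \<Rightarrow> real) \<Rightarrow> (real \<Rightarrow> real) \<Rightarrow> (('a \<Rightarrow> complex) \<Rightarrow> ('a \<Rightarrow> complex)) \<Rightarrow> bool" where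
  "inv_bound nrm rho G \<longleftrightarrow> (\<forall>m n. norm (G (delta n) m) \<le> rho (nrm (m - n)))"

end

theory Submission
  imports Defs "HOL-Real_Asymp.Real_Asymp"
begin



lemma l2_finite_bound:
  assumes "\<And>F. finite F \<Longrightarrow> L2_set (\<lambda>n. norm (f n)) F \<le> A"
  shows "f \<in> l2" "l2norm f \<le> A"
proof -
  have A0: "A \<ge> 0" using assms[of "{}"] by simp
  have s: "sum (\<lambda>n. (norm (f n))^2) F \<le> A^2" if "finite F" for F
  proof -
    have "sum (\<lambda>n. (norm (f n))^2) F = (L2_set (\<lambda>n. norm (f n)) F)^2"
      unfolding L2_set_def by (simp add: sum_nonneg)
    also have "\<dots> \<le> A^2" using assms[OF that] by (simp add: power_mono)
    finally show ?thesis .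
  qed
  have sm: "(\<lambda>n. (norm (f n))^2) summable_on UNIV"
    by (rule nonneg_bdd_above_summable_on) (auto intro!: bdd_aboveI2[where M="A^2"] s)
  then show "f \<in> l2" unfolding l2_def by simp
  have "(\<Sum>\<^sub>\<infinity>n. (norm (f n))^2) \<le> A^2"
    by (rule infsum_le_finite_sums[OF sm]) (use s in auto)
  then show "l2norm f \<le> A" unfolding l2norm_def using A0 real_sqrt_le_mono by fastforce
qed

lemma l2_ge_finite:
  assumes "f \<in> l2" "finite F"
  shows "L2_set (\<lambda>n. norm (f n)) F \<le> l2norm f"
proof -
  have "sum (\<lambda>n. (norm (f n))^2) F \<le> (\<Sum>\<^sub>\<infinity>n. (norm (f n))^2)"
    by (rule finite_sum_le_infsum) (use assms in \<open>auto simp: l2_def\<close>)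
  then show ?thesis unfolding l2norm_def L2_set_def using real_sqrt_le_mono by blast
qed

lemma l2norm_nonneg: "l2norm f \<ge> 0"
proof -
  have "0 \<le> (\<Sum>\<^sub>\<infinity>n. (norm (f n))^2)" by (rule infsum_nonneg) simp
  then show ?thesis unfolding l2norm_def by simp
qed

lemma norm_le_l2norm:
  assumes "f \<in> l2" shows "norm (f n) \<le> l2norm f"
  using l2_ge_finite[OF assms, of "{n}"] by simp

lemma l2_dom:
  assumes "f \<in> l2" "h \<in> l2" "a \<ge> 0" "b \<ge> 0"
    and "\<And>n. norm (g n) \<le> a * norm (f n) + b * norm (h n)"
  shows "g \<in> l2" "l2norm g \<le> a * l2norm f + b * l2norm h"
proof -
  have *: "L2_set (\<lambda>n. norm (g n)) F \<le> a * l2norm f + b * l2norm h" if "finite F" for F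
  proof -
    have "L2_set (\<lambda>n. norm (g n)) F \<le> L2_set (\<lambda>n. a * norm (f n) + b * norm (h n)) F"
      by (rule L2_set_mono) (use assms in auto)
    also have "\<dots> \<le> L2_set (\<lambda>n. a * norm (f n)) F + L2_set (\<lambda>n. b * norm (h n)) F"
      by (rule L2_set_triangle_ineq)
    also have "\<dots> = a * L2_set (\<lambda>n. norm (f n)) F + b * L2_set (\<lambda>n. norm (h n)) F"
      using assms by (simp add: L2_set_right_distrib)
    also have "\<dots> \<le> a * l2norm f + b * l2norm h"
      using assms l2_ge_finite that by (intro add_mono mult_left_mono) auto
    finally show ?thesis .
  qed
  show "g \<in> l2" "l2norm g \<le> a * l2norm f + b * l2norm h" using l2_finite_bound[OF *] by auto
qed

lemma l2_dom1:
  assumes "f \<in> l2" "a \<ge> 0" "\<And>n. norm (g n) \<le> a * norm (f n)"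
  shows "g \<in> l2" "l2norm g \<le> a * l2norm f"
  using l2_dom[OF assms(1) assms(1) assms(2) order_refl, of g] assms(3) by auto

lemma l2_add: assumes "f \<in> l2" "g \<in> l2"
  shows "(\<lambda>n. f n + g n) \<in> l2" "l2norm (\<lambda>n. f n + g n) \<le> l2norm f + l2norm g"
  using l2_dom[OF assms, of 1 1 "\<lambda>n. f n + g n"] by (auto simp: norm_triangle_ineq)

lemma l2_diff: assumes "f \<in> l2" "g \<in> l2"
  shows "(\<lambda>n. f n - g n) \<in> l2" "l2norm (\<lambda>n. f n - g n) \<le> l2norm f + l2norm g"
  using l2_dom[OF assms, of 1 1 "\<lambda>n. f n - g n"] by (auto simp: norm_triangle_ineq4)

lemma l2_scale: assumes "f \<in> l2"
  shows "(\<lambda>n. a * f n) \<in> l2" "l2norm (\<lambda>n. a * f n) \<le> norm a * l2norm f"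
  using l2_dom1[OF assms, of "norm a" "\<lambda>n. a * f n"] by (auto simp: norm_mult)

lemma l2norm_zero: assumes "f \<in> l2" "l2norm f \<le> 0" shows "f = (\<lambda>n. 0)"
proof
  fix n show "f n = 0" using norm_le_l2norm[OF assms(1), of n] assms(2) by (metis norm_le_zero_iff order_trans)
qed

lemma l2_zero: "(\<lambda>n. 0) \<in> l2" "l2norm (\<lambda>n. 0) = 0"
  by (auto simp: l2_def l2norm_def)

lemma delta_l2: "delta n \<in> l2"
proof (rule l2_finite_bound(1))
  fix F :: "'a set" assume "finite F"
  have "(\<Sum>m\<in>F. (norm (delta n m))^2) = (\<Sum>m\<in>F. if m = n then 1 else 0)"
    unfolding delta_def by (rule sum.cong) auto
  also have "\<dots> \<le> 1" using \<open>finite F\<close> by (simp add: sum.delta)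
  finally show "L2_set (\<lambda>m. norm (delta n m)) F \<le> 1" unfolding L2_set_def by simp
qed




lemma asym_ev: assumes "k > 0" "a > 0" "C > 1"
  shows "eventually (\<lambda>j::nat. C * (real j + 1) powr v * exp(-k * real j powr a) \<le> inverse (real j ^ 2)) at_top"
  using assms by real_asymp

lemma b_summable: assumes "k > 0" "a > 0" "C > 1"
  shows "summable (\<lambda>j::nat. C * (real j + 1) powr v * exp(-k * real j powr a))"
proof (rule summable_comparison_test_ev)
  show "summable (\<lambda>j::nat. inverse (real j ^ 2))" using inverse_power_summable[of 2] by simp
  show "\<forall>\<^sub>F n in sequentially. norm (C * (real n + 1) powr v * exp (- k * real n powr a)) \<le> inverse (real n ^ 2)"
    using asym_ev[OF assms, of v] assms by (simp add: abs_mult)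
qed

lemma c_l1:
  fixes nrm :: "'a \<Rightarrow> real" and c :: "'a \<Rightarrow> complex"
  assumes nrm_nonneg: "\<And>m. nrm m \<ge> 0"
    and balls: "\<And>R. R \<ge> 1 \<Longrightarrow> finite {m. nrm m \<le> R} \<and> real (card {m. nrm m \<le> R}) \<le> C * R powr \<nu>"
    and k: "0 < \<kappa>0" and a: "0 < \<alpha>0" and C: "C > 1"
    and c_decay: "\<And>n. norm (c n) \<le> exp (- \<kappa>0 * nrm n powr \<alpha>0)"
  shows "(\<lambda>d. norm (c d)) summable_on UNIV"
proof (rule nonneg_bdd_above_summable_on)
  define b where "b = (\<lambda>j::nat. C * (real j + 1) powr \<nu> * exp(-\<kappa>0 * real j powr \<alpha>0))"
  have bs: "summable b" unfolding b_def by (rule b_summable[OF k a C])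
  have b0: "b j \<ge> 0" for j unfolding b_def using C by simp
  define \<phi> where "\<phi> = (\<lambda>d. nat \<lfloor>nrm d\<rfloor>)"
  show "bdd_above (sum (\<lambda>d. norm (c d)) ` {F. F \<subseteq> UNIV \<and> finite F})"
  proof (rule bdd_aboveI2[where M="suminf b"])
    fix F :: "'a set" assume "F \<in> {F. F \<subseteq> UNIV \<and> finite F}"
    then have fF: "finite F" by simp
    have "sum (\<lambda>d. norm (c d)) F = (\<Sum>j\<in>\<phi> ` F. sum (\<lambda>d. norm (c d)) {d\<in>F. \<phi> d = j})"
      by (rule sum.image_gen[OF fF])
    also have "\<dots> \<le> (\<Sum>j\<in>\<phi> ` F. b j)"
    proof (rule sum_mono)
      fix j assume "j \<in> \<phi> ` F"
      have "sum (\<lambda>d. norm (c d)) {d\<in>F. \<phi> d = j} \<le> sum (\<lambda>d. exp(-\<kappa>0 * real j powr \<alpha>0)) {d\<in>F. \<phi> d = j}"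
      proof (rule sum_mono)
        fix d assume "d \<in> {d\<in>F. \<phi> d = j}"
        then have "real j \<le> nrm d" unfolding \<phi>_def using nrm_nonneg[of d]
          by (auto simp: of_nat_nat)
        then have "real j powr \<alpha>0 \<le> nrm d powr \<alpha>0" using a by (intro powr_mono2) auto
        then have "exp (- \<kappa>0 * nrm d powr \<alpha>0) \<le> exp(-\<kappa>0 * real j powr \<alpha>0)" using k by simp
        then show "norm (c d) \<le> exp(-\<kappa>0 * real j powr \<alpha>0)" using c_decay[of d] by linarith
      qed
      also have "\<dots> = real (card {d\<in>F. \<phi> d = j}) * exp(-\<kappa>0 * real j powr \<alpha>0)" by simp
      also have "\<dots> \<le> C * (real j + 1) powr \<nu> * exp(-\<kappa>0 * real j powr \<alpha>0)"
      proof (rule mult_right_mono)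
        have sub: "{d\<in>F. \<phi> d = j} \<subseteq> {m. nrm m \<le> real j + 1}"
          unfolding \<phi>_def using nrm_nonneg by auto
        have "real j + 1 \<ge> 1" by simp
        from balls[OF this] have "finite {m. nrm m \<le> real j + 1}" "real (card {m. nrm m \<le> real j + 1}) \<le> C * (real j + 1) powr \<nu>"
          by auto
        then show "real (card {d\<in>F. \<phi> d = j}) \<le> C * (real j + 1) powr \<nu>"
          using card_mono[OF _ sub] by (meson of_nat_le_iff order_trans)
      qed simp
      finally show "sum (\<lambda>d. norm (c d)) {d\<in>F. \<phi> d = j} \<le> b j" unfolding b_def .
    qed
    also have "\<dots> \<le> suminf b" by (rule sum_le_suminf[OF bs]) (use fF b0 in auto)
    finally show "sum (\<lambda>d. norm (c d)) F \<le> suminf b" .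
  qed
qed simp




definition Wop :: "('a::ab_group_add \<Rightarrow> complex) \<Rightarrow> ('a \<Rightarrow> complex) \<Rightarrow> ('a \<Rightarrow> complex)" where
  "Wop c f = (\<lambda>n. \<Sum>\<^sub>\<infinity>m\<in>UNIV - {n}. c (n - m) * f m)"

lemma Hop_Wop: "Hop lam eps c xi k f n = complex_of_real ((xi n + k)^2 / lam) * f n + complex_of_real (eps / lam) * Wop c f n"
  unfolding Hop_def Wop_def by simp

lemma infsum_finite_sum:
  fixes g :: "'b \<Rightarrow> 'a \<Rightarrow> real"
  assumes "finite F" "\<And>n. n \<in> F \<Longrightarrow> g n summable_on A"
  shows "(\<lambda>m. \<Sum>n\<in>F. g n m) summable_on A \<and> (\<Sum>n\<in>F. infsum (g n) A) = infsum (\<lambda>m. \<Sum>n\<in>F. g n m) A"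
  using assms
proof (induction F rule: finite_induct)
  case empty then show ?case by simp
next
  case (insert x F)
  then have s1: "g x summable_on A" and IH: "(\<lambda>m. \<Sum>n\<in>F. g n m) summable_on A \<and> (\<Sum>n\<in>F. infsum (g n) A) = infsum (\<lambda>m. \<Sum>n\<in>F. g n m) A"
    by auto
  show ?case using insert(1,2) IH s1
    by (auto simp: infsum_add summable_on_add)
qed

lemma cs_infsum:
  fixes a b :: "'a \<Rightarrow> real"
  assumes a0: "\<And>m. a m \<ge> 0" and b0: "\<And>m. b m \<ge> 0"
    and sa: "a summable_on A" and sab: "(\<lambda>m. a m * b m) summable_on A"
    and sabb: "(\<lambda>m. a m * (b m)^2) summable_on A"
  shows "(infsum (\<lambda>m. a m * b m) A)^2 \<le> infsum a A * infsum (\<lambda>m. a m * (b m)^2) A"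
proof -
  define X where "X = infsum (\<lambda>m. a m * b m) A"
  define S where "S = infsum a A"
  define Y where "Y = infsum (\<lambda>m. a m * (b m)^2) A"
  have X0: "X \<ge> 0" unfolding X_def by (rule infsum_nonneg) (use a0 b0 in simp)
  have S0: "S \<ge> 0" unfolding S_def by (rule infsum_nonneg) (use a0 in simp)
  have key: "2 * t * X \<le> t^2 * S + Y" if t: "t > 0" for t
  proof -
    have "2 * t * X = infsum (\<lambda>m. 2 * t * (a m * b m)) A"
      unfolding X_def by (rule infsum_cmult_right[symmetric]) (use sab in simp)
    also have "\<dots> \<le> infsum (\<lambda>m. t^2 * a m + a m * (b m)^2) A"
    proof (rule infsum_mono)
      show "(\<lambda>m. 2 * t * (a m * b m)) summable_on A" using sab by (rule summable_on_cmult_right)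
      show "(\<lambda>m. t^2 * a m + a m * (b m)^2) summable_on A"
        by (intro summable_on_add summable_on_cmult_right sa sabb)
      fix m
      have "0 \<le> a m * (b m - t)^2" using a0 by simp
      then show "2 * t * (a m * b m) \<le> t^2 * a m + a m * (b m)^2"
        by (simp add: power2_eq_square algebra_simps)
    qed
    also have "\<dots> = t^2 * S + Y"
    proof -
      have "infsum (\<lambda>m. t^2 * a m) A = t^2 * S" using infsum_cmult_right[of "t^2" a A] sa by (simp add: S_def)
      then show ?thesis unfolding Y_def
        by (subst infsum_add) (auto intro: summable_on_cmult_right sa sabb)
    qed
    finally show ?thesis .
  qed
  show ?thesis
  proof (cases "S = 0")
    case True
    have "X \<le> 0"
    proof (rule ccontr)
      assume "\<not> X \<le> 0"
      then have Xp: "X > 0" by simp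
      have "Y \<ge> 0" unfolding Y_def by (rule infsum_nonneg) (use a0 in simp)
      define t where "t = (Y + 1) / X"
      have "t > 0" unfolding t_def using Xp \<open>Y \<ge> 0\<close> by simp
      from key[OF this] True have "2 * t * X \<le> Y" by simp
      moreover have "t * X = Y + 1" unfolding t_def using Xp by simp
      ultimately show False using \<open>Y \<ge> 0\<close> by linarith
    qed
    then have "X = 0" using X0 by simp
    then show ?thesis using True unfolding X_def S_def Y_def by simp
  next
    case False
    then have Sp: "S > 0" using S0 by simp
    show ?thesis
    proof (cases "X = 0")
      case True
      have "Y \<ge> 0" unfolding Y_def by (rule infsum_nonneg) (use a0 in simp)
      then show ?thesis using True S0 unfolding X_def S_def Y_def by simp
    next
      case False
      then have Xp: "X > 0" using X0 by simp
      have "X / S > 0" using Xp Sp by simp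
      from key[OF this] have "2 * (X / S) * X \<le> (X/S)^2 * S + Y" .
      moreover have "(X/S)^2 * S = X^2 / S" using Sp by (simp add: power2_eq_square)
      moreover have "2 * (X / S) * X = 2 * (X^2 / S)" by (simp add: power2_eq_square)
      ultimately have "X^2 / S \<le> Y" by linarith
      then have "X^2 \<le> Y * S" by (simp only: pos_divide_le_eq[OF Sp, symmetric])
      then show ?thesis by (simp add: X_def S_def Y_def mult.commute)
    qed
  qed
qed




lemma bij_minus: "bij_betw (\<lambda>m. n - m) (UNIV::'a::ab_group_add set) UNIV"
  by (rule bij_betwI[where g="\<lambda>m. n - m"]) auto

lemma amgm_aux: fixes a b :: real assumes "0 \<le> a" shows "a * b \<le> (a + a * b^2) / 2"
proof -
  have "0 \<le> a * (b - 1)^2" using assms by simp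
  moreover have "a * (b - 1)^2 = a * b^2 - 2 * (a * b) + a" by (simp add: power2_eq_square algebra_simps)
  ultimately have "2 * (a * b) \<le> a + a * b^2" by linarith
  then show ?thesis by simp
qed

lemma W_facts:
  fixes c f :: "'a::ab_group_add \<Rightarrow> complex"
  assumes cs: "(\<lambda>d. norm (c d)) summable_on UNIV" and c1: "\<And>d. norm (c d) \<le> 1"
    and f: "f \<in> l2"
  shows "\<And>n. (\<lambda>m. c (n - m) * f m) summable_on (UNIV - {n})"
    and "Wop c f \<in> l2"
    and "l2norm (Wop c f) \<le> (\<Sum>\<^sub>\<infinity>d. norm (c d)) * l2norm f"
proof -
  define S where "S = (\<Sum>\<^sub>\<infinity>d. norm (c d))"
  have S0: "S \<ge> 0" unfolding S_def by (rule infsum_nonneg) simp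
  have fs: "(\<lambda>m. (norm (f m))^2) summable_on UNIV" using f unfolding l2_def by simp
  have cn: "(\<lambda>m. norm (c (n - m))) summable_on UNIV" for n
    using summable_on_reindex_bij_betw[OF bij_minus[of n], of "\<lambda>d. norm (c d)"] cs by simp
  have cnS: "(\<Sum>\<^sub>\<infinity>m. norm (c (n - m))) = S" for n
    using infsum_reindex_bij_betw[OF bij_minus[of n], of "\<lambda>d. norm (c d)"] unfolding S_def by simp
  have ab: "norm (c (n - m)) * norm (f m) \<le> (norm (c (n - m)) + (norm (f m))^2) / 2" for n m
  proof -
    have "norm (c (n - m)) * norm (f m) \<le> (norm (c (n - m)) + norm (c (n - m)) * (norm (f m))^2) / 2"
      by (rule amgm_aux) simp
    also have "\<dots> \<le> (norm (c (n - m)) + (norm (f m))^2) / 2"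
      using mult_right_mono[OF c1[of "n - m"], of "(norm (f m))^2"] by simp
    finally show ?thesis .
  qed
  have abs_sum: "(\<lambda>m. norm (c (n - m)) * norm (f m)) summable_on UNIV" for n
  proof (rule summable_on_comparison_test)
    show "(\<lambda>m. (norm (c (n - m)) + (norm (f m))^2) / 2) summable_on UNIV"
      using summable_on_cmult_left[OF summable_on_add[OF cn[of n] fs], of "1/2"] by simp
  qed (use ab in auto)
  have abb_sum: "(\<lambda>m. norm (c (n - m)) * (norm (f m))^2) summable_on UNIV" for n
  proof (rule summable_on_comparison_test[OF fs])
    fix m show "norm (c (n - m)) * (norm (f m))^2 \<le> (norm (f m))^2"
      using mult_right_mono[OF c1[of "n - m"], of "(norm (f m))^2"] by simp
  qed simp
  have abs': "(\<lambda>m. norm (c (n - m) * f m)) summable_on UNIV" for n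
    using abs_sum[of n] by (simp add: norm_mult)
  have sumW: "(\<lambda>m. norm (c (n - m) * f m)) summable_on (UNIV - {n})" for n
    by (rule summable_on_subset[OF abs'[of n]]) auto
  show "(\<lambda>m. c (n - m) * f m) summable_on (UNIV - {n})" for n
    by (rule abs_summable_summable[OF sumW])
  have Wn: "(norm (Wop c f n))^2 \<le> S * (\<Sum>\<^sub>\<infinity>m. norm (c (n - m)) * (norm (f m))^2)" for n
  proof -
    have "norm (Wop c f n) \<le> (\<Sum>\<^sub>\<infinity>m\<in>UNIV - {n}. norm (c (n - m) * f m))"
      unfolding Wop_def by (rule norm_infsum_bound[OF sumW])
    also have "\<dots> \<le> (\<Sum>\<^sub>\<infinity>m. norm (c (n - m)) * norm (f m))"
      by (rule infsum_mono_neutral[OF sumW abs_sum]) (auto simp: norm_mult)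
    finally have 1: "norm (Wop c f n) \<le> (\<Sum>\<^sub>\<infinity>m. norm (c (n - m)) * norm (f m))" .
    have "(norm (Wop c f n))^2 \<le> (\<Sum>\<^sub>\<infinity>m. norm (c (n - m)) * norm (f m))^2"
      using 1 by (simp add: power_mono)
    also have "\<dots> \<le> (\<Sum>\<^sub>\<infinity>m. norm (c (n - m))) * (\<Sum>\<^sub>\<infinity>m. norm (c (n - m)) * (norm (f m))^2)"
      by (rule cs_infsum) (use cn abs_sum abb_sum in auto)
    finally show ?thesis using cnS by simp
  qed
  have fin: "L2_set (\<lambda>n. norm (Wop c f n)) F \<le> S * l2norm f" if F: "finite F" for F
  proof -
    have "(\<Sum>n\<in>F. (norm (Wop c f n))^2) \<le> (\<Sum>n\<in>F. S * (\<Sum>\<^sub>\<infinity>m. norm (c (n - m)) * (norm (f m))^2))"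
      by (rule sum_mono) (rule Wn)
    also have "\<dots> = S * (\<Sum>\<^sub>\<infinity>m. \<Sum>n\<in>F. norm (c (n - m)) * (norm (f m))^2)"
      using infsum_finite_sum[OF F, of "\<lambda>n m. norm (c (n - m)) * (norm (f m))^2" UNIV] abb_sum
      by (simp only: sum_distrib_left[symmetric])
    also have "\<dots> \<le> S * (\<Sum>\<^sub>\<infinity>m. S * (norm (f m))^2)"
    proof (rule mult_left_mono[OF _ S0], rule infsum_mono)
      show "(\<lambda>m. \<Sum>n\<in>F. norm (c (n - m)) * (norm (f m))^2) summable_on UNIV"
        using infsum_finite_sum[OF F, of "\<lambda>n m. norm (c (n - m)) * (norm (f m))^2" UNIV] abb_sum by simp
      show "(\<lambda>m. S * (norm (f m))^2) summable_on UNIV" by (rule summable_on_cmult_right[OF fs])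
      fix m
      have "(\<Sum>n\<in>F. norm (c (n - m))) = (\<Sum>d\<in>(\<lambda>n. n - m) ` F. norm (c d))"
        by (rule sum.reindex[symmetric, unfolded o_def]) (auto simp: inj_on_def)
      also have "\<dots> \<le> S" unfolding S_def by (rule finite_sum_le_infsum[OF cs]) (use F in auto)
      finally have "(\<Sum>n\<in>F. norm (c (n - m))) \<le> S" .
      then show "(\<Sum>n\<in>F. norm (c (n - m)) * (norm (f m))^2) \<le> S * (norm (f m))^2"
        unfolding sum_distrib_right[symmetric] by (rule mult_right_mono) simp_all
    qed
    also have "\<dots> = (S * l2norm f)^2"
    proof -
      have i0: "(\<Sum>\<^sub>\<infinity>m. (norm (f m))^2) \<ge> 0" by (rule infsum_nonneg) simp
      have "(l2norm f)^2 = (\<Sum>\<^sub>\<infinity>m. (norm (f m))^2)" unfolding l2norm_def using i0 by simp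
      moreover have "(\<Sum>\<^sub>\<infinity>m. S * (norm (f m))^2) = S * (\<Sum>\<^sub>\<infinity>m. (norm (f m))^2)"
        by (rule infsum_cmult_right) (use fs in simp)
      ultimately show ?thesis by (simp add: power_mult_distrib power2_eq_square)
    qed
    finally have "(\<Sum>n\<in>F. (norm (Wop c f n))^2) \<le> (S * l2norm f)^2" .
    then have "sqrt (\<Sum>n\<in>F. (norm (Wop c f n))^2) \<le> sqrt ((S * l2norm f)^2)" by (rule real_sqrt_le_mono)
    also have "\<dots> = S * l2norm f" using S0 l2norm_nonneg[of f] by simp
    finally show ?thesis unfolding L2_set_def .
  qed
  show "Wop c f \<in> l2" "l2norm (Wop c f) \<le> (\<Sum>\<^sub>\<infinity>d. norm (c d)) * l2norm f"
    using l2_finite_bound[OF fin] unfolding S_def by auto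
qed




locale hset =
  fixes lam eps :: real and c :: "'a::ab_group_add \<Rightarrow> complex" and xi :: "'a \<Rightarrow> real"
  assumes lam_pos: "lam > 0" and cs: "(\<lambda>d. norm (c d)) summable_on UNIV"
    and c1: "\<And>d. norm (c d) \<le> 1" and xi_add: "\<And>m n. xi (m + n) = xi m + xi n"
begin

abbreviation "H k \<equiv> Hop lam eps c xi k"
definition "S = (\<Sum>\<^sub>\<infinity>d. norm (c d))"

lemma S_nonneg: "S \<ge> 0" unfolding S_def by (rule infsum_nonneg) simp

lemma xi0: "xi 0 = 0" using xi_add[of 0 0] by simp
lemma xi_minus: "xi (- m) = - xi m" using xi_add[of m "-m"] xi0 by simp
lemma xi_diff: "xi (m - n) = xi m - xi n" using xi_add[of m "-n"] xi_minus[of n] by simp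

lemma W_sum: "f \<in> l2 \<Longrightarrow> (\<lambda>m. c (n - m) * f m) summable_on (UNIV - {n})"
  using W_facts(1)[OF cs c1] by blast
lemma W_l2: "f \<in> l2 \<Longrightarrow> Wop c f \<in> l2"
  using W_facts(2)[OF cs c1] by blast
lemma W_bound: "f \<in> l2 \<Longrightarrow> l2norm (Wop c f) \<le> S * l2norm f"
  using W_facts(3)[OF cs c1] unfolding S_def by blast

lemma W_diff: assumes "f \<in> l2" "g \<in> l2"
  shows "Wop c (\<lambda>n. f n - g n) n = Wop c f n - Wop c g n"
proof -
  have "Wop c (\<lambda>n. f n - g n) n = (\<Sum>\<^sub>\<infinity>m\<in>UNIV - {n}. c (n - m) * f m + - (c (n - m) * g m))"
    unfolding Wop_def by (rule infsum_cong) (simp add: right_diff_distrib)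
  also have "\<dots> = Wop c f n + (\<Sum>\<^sub>\<infinity>m\<in>UNIV - {n}. - (c (n - m) * g m))"
    unfolding Wop_def
    by (rule infsum_add[OF W_sum[OF assms(1)]]) (simp only: summable_on_uminus W_sum[OF assms(2)])
  also have "\<dots> = Wop c f n - Wop c g n" unfolding Wop_def by (simp add: infsum_uminus)
  finally show ?thesis .
qed

lemma Hop_R: "H k f n = ((xi n + k)^2 / lam) *\<^sub>R f n + (eps / lam) *\<^sub>R Wop c f n"
  unfolding Hop_Wop by (simp add: scaleR_conv_of_real)

lemma Hop_diff: assumes "f \<in> l2" "g \<in> l2"
  shows "H k (\<lambda>n. f n - g n) n = H k f n - H k g n"
  unfolding Hop_R W_diff[OF assms] by (simp add: scaleR_diff_right)

lemma Hop_shiftk: "H k g n = H k' g n + (((xi n + k)^2 - (xi n + k')^2) / lam) *\<^sub>R g n"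
  unfolding Hop_R by (simp add: diff_divide_distrib scaleR_diff_left)

lemma Hdom_iff: "g \<in> Hdom xi k \<longleftrightarrow> g \<in> l2 \<and> (\<lambda>n. (xi n + k)^2 *\<^sub>R g n) \<in> l2"
proof -
  have "(norm ((xi n + k)^2 *\<^sub>R g n))^2 = (xi n + k)^4 * (norm (g n))^2" for n
    by (simp add: power_mult_distrib flip: power_mult)
  then show ?thesis unfolding Hdom_def l2_def by simp
qed

lemma sq_shift_bound: "(x + k') ^ 2 \<le> 2 * (x + k)^2 + 2 * (k' - k)^2" for x k k' :: real
proof -
  have "0 \<le> ((x + k) - (k' - k))^2" by simp
  then show ?thesis by (simp add: power2_eq_square algebra_simps)
qed

lemma Hdom_indep: assumes "g \<in> Hdom xi k" shows "g \<in> Hdom xi k'"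
proof -
  from assms have g: "g \<in> l2" and gk: "(\<lambda>n. (xi n + k)^2 *\<^sub>R g n) \<in> l2"
    unfolding Hdom_iff by auto
  have "(\<lambda>n. (xi n + k')^2 *\<^sub>R g n) \<in> l2"
  proof (rule l2_dom(1)[OF gk g, of 2 "2 * (k' - k)^2"])
    fix n
    have "norm ((xi n + k')^2 *\<^sub>R g n) = (xi n + k')^2 * norm (g n)" by simp
    also have "\<dots> \<le> (2 * (xi n + k)^2 + 2 * (k' - k)^2) * norm (g n)"
      by (rule mult_right_mono[OF sq_shift_bound]) simp
    also have "\<dots> = 2 * norm ((xi n + k)^2 *\<^sub>R g n) + 2 * (k' - k)^2 * norm (g n)"
      by (simp add: algebra_simps)
    finally show "norm ((xi n + k')^2 *\<^sub>R g n) \<le> 2 * norm ((xi n + k)^2 *\<^sub>R g n) + 2 * (k' - k)^2 * norm (g n)" .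
  qed auto
  then show ?thesis using g unfolding Hdom_iff by auto
qed

lemma Hdom_l2: "g \<in> Hdom xi k \<Longrightarrow> g \<in> l2" unfolding Hdom_def by simp

lemma Hdom_diff: assumes "f \<in> Hdom xi k" "g \<in> Hdom xi k" shows "(\<lambda>n. f n - g n) \<in> Hdom xi k"
proof -
  from assms have "f \<in> l2" "g \<in> l2" "(\<lambda>n. (xi n + k)^2 *\<^sub>R f n) \<in> l2"
    "(\<lambda>n. (xi n + k)^2 *\<^sub>R g n) \<in> l2" unfolding Hdom_iff by auto
  from l2_diff(1)[OF this(1,2)] l2_diff(1)[OF this(3,4)] show ?thesis unfolding Hdom_iff
    by (simp add: scaleR_diff_right)
qed

lemma l2_scaleR: "f \<in> l2 \<Longrightarrow> (\<lambda>n. r *\<^sub>R f n) \<in> l2"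
  using l2_dom1(1)[of f "\<bar>r\<bar>" "\<lambda>n. r *\<^sub>R f n"] by simp

lemma EmH_l2: assumes "g \<in> Hdom xi k" shows "(\<lambda>n. complex_of_real E * g n - H k g n) \<in> l2"
proof -
  from assms have g: "g \<in> l2" and gk: "(\<lambda>n. (xi n + k)^2 *\<^sub>R g n) \<in> l2"
    unfolding Hdom_iff by auto
  have 1: "(\<lambda>n. complex_of_real E * g n) \<in> l2" by (rule l2_scale(1)[OF g])
  have 2: "(\<lambda>n. (1/lam) *\<^sub>R ((xi n + k)^2 *\<^sub>R g n)) \<in> l2" by (rule l2_scaleR[OF gk])
  have 3: "(\<lambda>n. (eps/lam) *\<^sub>R Wop c g n) \<in> l2" by (rule l2_scaleR[OF W_l2[OF g]])
  have "(\<lambda>n. complex_of_real E * g n - ((1/lam) *\<^sub>R ((xi n + k)^2 *\<^sub>R g n)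
       + (eps/lam) *\<^sub>R Wop c g n)) \<in> l2"
    by (rule l2_diff(1)[OF 1 l2_add(1)[OF 2 3]])
  then show ?thesis unfolding Hop_R by simp
qed

definition shift :: "'a \<Rightarrow> ('a \<Rightarrow> complex) \<Rightarrow> ('a \<Rightarrow> complex)" where
  "shift p f = (\<lambda>n. f (n + p))"

lemma bij_plus: fixes p :: 'a shows "bij_betw (\<lambda>n. n + p) (UNIV::'a set) UNIV"
  by (rule bij_betwI[where g="\<lambda>n. n - p"]) auto

lemma bij_plus': fixes p :: 'a shows "bij_betw (\<lambda>n. n + p) (UNIV - {m}) (UNIV - {m + p})"
  by (rule bij_betwI[where g="\<lambda>n. n - p"]) auto

lemma shift_l2: assumes "f \<in> l2" shows "shift p f \<in> l2" "l2norm (shift p f) = l2norm f"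
proof -
  have "(\<lambda>n. (norm (f (n + p)))^2) summable_on UNIV"
    using summable_on_reindex_bij_betw[OF bij_plus[of p], of "\<lambda>n. (norm (f n))^2"] assms
    unfolding l2_def by simp
  then show "shift p f \<in> l2" unfolding l2_def shift_def by simp
  show "l2norm (shift p f) = l2norm f" unfolding l2norm_def shift_def
    using infsum_reindex_bij_betw[OF bij_plus[of p], of "\<lambda>n. (norm (f n))^2"] by simp
qed

lemma shift_Hdom: assumes "g \<in> Hdom xi k" shows "shift p g \<in> Hdom xi (k + xi p)"
proof -
  from assms have g: "g \<in> l2" and gk: "(\<lambda>n. (xi n + k)^2 *\<^sub>R g n) \<in> l2"
    unfolding Hdom_iff by auto
  have "shift p (\<lambda>n. (xi n + k)^2 *\<^sub>R g n) = (\<lambda>n. (xi n + (k + xi p))^2 *\<^sub>R shift p g n)"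
    unfolding shift_def by (simp add: xi_add add.assoc add.commute add.left_commute)
  then show ?thesis using shift_l2(1)[OF g, of p] shift_l2(1)[OF gk, of p] unfolding Hdom_iff by simp
qed

lemma shift_Hop: "H (k + xi p) (shift p h) n = H k h (n + p)"
proof -
  have "Wop c (shift p h) n = Wop c h (n + p)"
    unfolding Wop_def shift_def
    using infsum_reindex_bij_betw[OF bij_plus'[of p n], of "\<lambda>m. c (n + p - m) * h m"] by simp
  then show ?thesis unfolding Hop_R shift_def by (simp add: xi_add add_ac)
qed

lemma shift_shift: "shift p (shift q f) = shift (q + p) f"
  unfolding shift_def by (simp add: add_ac)
lemma shift_0: "shift 0 f = f" unfolding shift_def by simp

end



context hset begin

abbreviation "Inv E k G \<equiv> is_inverse_of_EmH lam eps c xi E k G"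

lemma Inv_D:
  assumes "Inv E k G"
  shows "\<And>f. f \<in> l2 \<Longrightarrow> G f \<in> Hdom xi k"
    and "\<And>f. f \<in> l2 \<Longrightarrow> (\<lambda>n. complex_of_real E * G f n - H k (G f) n) = f"
    and "\<And>g. g \<in> Hdom xi k \<Longrightarrow> G (\<lambda>n. complex_of_real E * g n - H k g n) = g"
    and "\<exists>B. \<forall>f\<in>l2. l2norm (G f) \<le> B * l2norm f"
  using assms unfolding is_inverse_of_EmH_def by auto

lemma Inv_bound_nonneg:
  assumes "Inv E k G" obtains B where "B \<ge> 0" "\<And>f. f \<in> l2 \<Longrightarrow> l2norm (G f) \<le> B * l2norm f"
proof -
  from Inv_D(4)[OF assms] obtain B where B: "\<forall>f\<in>l2. l2norm (G f) \<le> B * l2norm f" by blast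
  show ?thesis
  proof (rule that[of "max B 0"])
    fix f :: "'a \<Rightarrow> complex" assume "f \<in> l2"
    then have "l2norm (G f) \<le> B * l2norm f" using B by blast
    also have "\<dots> \<le> max B 0 * l2norm f" by (rule mult_right_mono) (auto simp: l2norm_nonneg)
    finally show "l2norm (G f) \<le> max B 0 * l2norm f" .
  qed simp
qed

lemma Inv_diff:
  assumes G: "Inv E k G" and u: "u \<in> l2" and w: "w \<in> l2"
  shows "G (\<lambda>n. u n - w n) = (\<lambda>n. G u n - G w n)"
proof -
  define a where "a = (\<lambda>n. G u n - G w n)"
  have Gu: "G u \<in> Hdom xi k" and Gw: "G w \<in> Hdom xi k" using Inv_D(1)[OF G] u w by auto
  have a: "a \<in> Hdom xi k" unfolding a_def by (rule Hdom_diff[OF Gu Gw])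
  have "(\<lambda>n. complex_of_real E * a n - H k a n)
      = (\<lambda>n. (complex_of_real E * G u n - H k (G u) n) - (complex_of_real E * G w n - H k (G w) n))"
    unfolding a_def Hop_diff[OF Hdom_l2[OF Gu] Hdom_l2[OF Gw]] by (simp add: algebra_simps)
  also have "\<dots> = (\<lambda>n. u n - w n)"
    using fun_cong[OF Inv_D(2)[OF G u]] fun_cong[OF Inv_D(2)[OF G w]] by simp
  finally have "G (\<lambda>n. u n - w n) = G (\<lambda>n. complex_of_real E * a n - H k a n)" by simp
  also have "\<dots> = a" by (rule Inv_D(3)[OF G a])
  finally show ?thesis unfolding a_def .
qed

lemma Inv_zero: assumes G: "Inv E k G" shows "G (\<lambda>n. 0) = (\<lambda>n. 0)"
  using Inv_diff[OF G l2_zero(1) l2_zero(1)] by simp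

lemma shift_delta: "shift (- p) (delta n) = delta (n + p)"
  unfolding shift_def delta_def by (auto simp: algebra_simps)

lemma shift_inv: "shift (- p) (shift p f) = f" "shift p (shift (-p) f) = f"
  unfolding shift_def by auto

lemma Inv_shift:
  fixes p :: 'a
  assumes G: "Inv E k G" and B: "\<And>f. f \<in> l2 \<Longrightarrow> l2norm (G f) \<le> B * l2norm f"
  defines "G' \<equiv> (\<lambda>f. shift p (G (shift (- p) f)))"
  shows "Inv E (k + xi p) G'" "\<And>f. f \<in> l2 \<Longrightarrow> l2norm (G' f) \<le> B * l2norm f"
proof -
  have ck: "\<And>f::'a\<Rightarrow>complex. f \<in> l2 \<Longrightarrow> G' f \<in> Hdom xi (k + xi p)"
    unfolding G'_def by (rule shift_Hdom, rule Inv_D(1)[OF G], rule shift_l2(1))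
  have eq1: "(\<lambda>n. complex_of_real E * G' f n - H (k + xi p) (G' f) n) = f" if f: "f \<in> l2" for f :: "'a \<Rightarrow> complex"
  proof
    fix n
    have "complex_of_real E * G' f n - H (k + xi p) (G' f) n
        = complex_of_real E * G (shift (- p) f) (n + p) - H k (G (shift (- p) f)) (n + p)"
      unfolding G'_def shift_Hop by (simp add: shift_def)
    also have "\<dots> = shift (- p) f (n + p)"
      using fun_cong[OF Inv_D(2)[OF G shift_l2(1)[OF f, of "-p"]], of "n + p"] .
    also have "\<dots> = f n" by (simp add: shift_def)
    finally show "complex_of_real E * G' f n - H (k + xi p) (G' f) n = f n" .
  qed
  have eq2: "G' (\<lambda>n. complex_of_real E * h n - H (k + xi p) h n) = h" if h: "h \<in> Hdom xi (k + xi p)" for h :: "'a \<Rightarrow> complex"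
  proof -
    define g where "g = shift (- p) h"
    have g: "g \<in> Hdom xi k" unfolding g_def using shift_Hdom[OF h, of "-p"] by (simp add: xi_minus)
    have hg: "h = shift p g" unfolding g_def by (simp add: shift_inv)
    have "(\<lambda>n. complex_of_real E * h n - H (k + xi p) h n) = shift p (\<lambda>n. complex_of_real E * g n - H k g n)"
      unfolding hg by (rule ext, subst shift_Hop, simp add: shift_def)
    then have "G' (\<lambda>n. complex_of_real E * h n - H (k + xi p) h n) = shift p (G (\<lambda>n. complex_of_real E * g n - H k g n))"
      unfolding G'_def by (simp add: shift_inv)
    also have "\<dots> = shift p g" using Inv_D(3)[OF G g] by simp
    finally show ?thesis using hg by simp
  qed
  have bd: "l2norm (G' f) \<le> B * l2norm f" if f: "f \<in> l2" for f :: "'a \<Rightarrow> complex"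
  proof -
    have "l2norm (G' f) = l2norm (G (shift (- p) f))" unfolding G'_def
      by (rule shift_l2(2)[OF Hdom_l2[OF Inv_D(1)[OF G shift_l2(1)[OF f]]]])
    also have "\<dots> \<le> B * l2norm (shift (- p) f)" by (rule B[OF shift_l2(1)[OF f]])
    also have "\<dots> = B * l2norm f" using shift_l2(2)[OF f] by simp
    finally show ?thesis .
  qed
  show "Inv E (k + xi p) G'" unfolding is_inverse_of_EmH_def using ck eq1 eq2 bd by blast
  show "\<And>f. f \<in> l2 \<Longrightarrow> l2norm (G' f) \<le> B * l2norm f" by (rule bd)
qed

lemma Inv_shift_delta: fixes G :: "('a \<Rightarrow> complex) \<Rightarrow> ('a \<Rightarrow> complex)" shows "(\<lambda>f. shift p (G (shift (- p) f))) (delta n) m = G (delta (n + p)) (m + p)"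
  by (simp add: shift_delta) (simp add: shift_def)

end



lemma l2_tri: assumes "a \<in> l2" "b \<in> l2" "c \<in> l2"
  shows "l2norm (\<lambda>n. a n - c n) \<le> l2norm (\<lambda>n. a n - b n) + l2norm (\<lambda>n. b n - c n)"
proof -
  have 1: "(\<lambda>n. a n - b n) \<in> l2" "(\<lambda>n. b n - c n) \<in> l2" using l2_diff(1) assms by auto
  have "norm (a n - c n) \<le> 1 * norm (a n - b n) + 1 * norm (b n - c n)" for n
  proof -
    have "a n - c n = (a n - b n) + (b n - c n)" by simp
    then show ?thesis using norm_triangle_ineq[of "a n - b n" "b n - c n"] by simp
  qed
  from l2_dom(2)[OF 1, of 1 1 "\<lambda>n. a n - c n", OF _ _ this] show ?thesis by simp
qed

lemma fixpoint:
  fixes K :: "('a \<Rightarrow> complex) \<Rightarrow> ('a \<Rightarrow> complex)"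
  assumes Kl2: "\<And>u. u \<in> l2 \<Longrightarrow> K u \<in> l2"
    and Kc: "\<And>u w. u \<in> l2 \<Longrightarrow> w \<in> l2 \<Longrightarrow> l2norm (\<lambda>n. K u n - K w n) \<le> q * l2norm (\<lambda>n. u n - w n)"
    and q0: "0 \<le> q" and q1: "q < 1" and f: "f \<in> l2"
  shows "\<exists>u\<in>l2. u = (\<lambda>n. f n + K u n)"
proof -
  define T where "T = (\<lambda>u n. f n + K u n)"
  have Tl2: "u \<in> l2 \<Longrightarrow> T u \<in> l2" for u unfolding T_def using l2_add(1)[OF f Kl2] by blast
  have Tc: "u \<in> l2 \<Longrightarrow> w \<in> l2 \<Longrightarrow> l2norm (\<lambda>n. T u n - T w n) \<le> q * l2norm (\<lambda>n. u n - w n)" for u w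
    unfolding T_def using Kc by simp
  define U where "U j = (T ^^ j) f" for j
  have U0: "U 0 = f" and US: "U (Suc j) = T (U j)" for j unfolding U_def by auto
  have Ul2: "U j \<in> l2" for j by (induction j) (auto simp: U0 US f Tl2)
  define A where "A = l2norm (\<lambda>n. U 1 n - U 0 n)"
  have A0: "A \<ge> 0" unfolding A_def by (rule l2norm_nonneg)
  have step: "l2norm (\<lambda>n. U (Suc j) n - U j n) \<le> q^j * A" for j
  proof (induction j)
    case 0 then show ?case unfolding A_def by simp
  next
    case (Suc j)
    have "l2norm (\<lambda>n. U (Suc (Suc j)) n - U (Suc j) n) \<le> q * l2norm (\<lambda>n. U (Suc j) n - U j n)"
      unfolding US[of "Suc j"] US[of j] by (rule Tc[OF Tl2[OF Ul2] Ul2])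
    also have "\<dots> \<le> q * (q^j * A)" by (rule mult_left_mono[OF Suc q0])
    finally show ?case by simp
  qed
  have far: "l2norm (\<lambda>n. U (j + m) n - U j n) \<le> q^j * A * (1 - q^m) / (1 - q)" for j m
  proof (induction m)
    case 0 then show ?case by (simp add: l2_zero)
  next
    case (Suc m)
    have "l2norm (\<lambda>n. U (j + Suc m) n - U j n) \<le> l2norm (\<lambda>n. U (Suc (j + m)) n - U (j + m) n) + l2norm (\<lambda>n. U (j + m) n - U j n)"
      using l2_tri[OF Ul2 Ul2 Ul2] by simp
    also have "\<dots> \<le> q^(j+m) * A + q^j * A * (1 - q^m) / (1 - q)" by (intro add_mono step Suc)
    also have "\<dots> = q^j * A * (1 - q^Suc m) / (1 - q)" using q1
      by (simp add: field_simps power_add)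
    finally show ?case .
  qed
  have far': "l2norm (\<lambda>n. U (j + m) n - U j n) \<le> q^j * A / (1 - q)" for j m
  proof -
    have "q^j * A * (1 - q^m) \<le> q^j * A" using q0 q1 A0
      by (simp add: mult_left_le power_le_one zero_le_power)
    then have "q^j * A * (1 - q^m) / (1 - q) \<le> q^j * A / (1 - q)" using q1 by (simp add: divide_right_mono)
    then show ?thesis using far[of j m] by linarith
  qed
  define D where "D j n = U (Suc j) n - U j n" for j n
  have Dle: "norm (D j n) \<le> q^j * A" for j n
    unfolding D_def using norm_le_l2norm[OF l2_diff(1)[OF Ul2[of "Suc j"] Ul2[of j]], of n] step[of j] by simp
  have Dsum: "summable (\<lambda>j. D j n)" for n
  proof (rule summable_comparison_test)
    show "\<exists>N. \<forall>j\<ge>N. norm (D j n) \<le> q^j * A" using Dle by blast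
    show "summable (\<lambda>j. q^j * A)" using summable_geometric[of q] q0 q1 by (intro summable_mult2) simp
  qed
  define u where "u n = U 0 n + (\<Sum>j. D j n)" for n
  have Ulim: "(\<lambda>j. U j n) \<longlonglongrightarrow> u n" for n
  proof -
    have "U j n = U 0 n + (\<Sum>i<j. D i n)" for j
      unfolding D_def using sum_lessThan_telescope[of "\<lambda>i. U i n" j] by simp
    then have eq: "(\<lambda>j. U j n) = (\<lambda>j. U 0 n + (\<Sum>i<j. D i n))" by (rule ext)
    show ?thesis unfolding eq u_def by (intro tendsto_add tendsto_const summable_LIMSEQ Dsum)
  qed
  have lim_fin: "L2_set (\<lambda>n. norm (u n - U j n)) F \<le> q^j * A / (1 - q)" if F: "finite F" for j F
  proof (rule LIMSEQ_le_const2)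
    show "(\<lambda>i. L2_set (\<lambda>n. norm (U i n - U j n)) F) \<longlonglongrightarrow> L2_set (\<lambda>n. norm (u n - U j n)) F"
      unfolding L2_set_def by (intro tendsto_intros Ulim)
    show "\<exists>N. \<forall>i\<ge>N. L2_set (\<lambda>n. norm (U i n - U j n)) F \<le> q^j * A / (1 - q)"
    proof (intro exI allI impI)
      fix i assume "j \<le> i"
      then obtain m where i: "i = j + m" using le_Suc_ex by blast
      show "L2_set (\<lambda>n. norm (U i n - U j n)) F \<le> q^j * A / (1 - q)"
        using l2_ge_finite[OF l2_diff(1)[OF Ul2 Ul2] F] far'[of j m] unfolding i by (meson order_trans)
    qed
  qed
  have uU1: "(\<lambda>n. u n - U j n) \<in> l2" for j
    by (rule l2_finite_bound(1)) (rule lim_fin)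
  have uU2: "l2norm (\<lambda>n. u n - U j n) \<le> q^j * A / (1 - q)" for j
    by (rule l2_finite_bound(2)) (rule lim_fin)
  note uU = uU1 uU2
  have ul2: "u \<in> l2"
    using l2_add(1)[OF uU(1)[of 0] Ul2[of 0]] by simp
  have Tul2: "T u \<in> l2" by (rule Tl2[OF ul2])
  have small: "l2norm (\<lambda>n. u n - T u n) \<le> 2 * A / (1 - q) * q^(Suc j)" for j
  proof -
    have 1: "l2norm (\<lambda>n. u n - T u n) \<le> l2norm (\<lambda>n. u n - U (Suc j) n) + l2norm (\<lambda>n. U (Suc j) n - T u n)"
      by (rule l2_tri[OF ul2 Ul2 Tul2])
    have 2: "l2norm (\<lambda>n. U (Suc j) n - T u n) \<le> q * l2norm (\<lambda>n. U j n - u n)"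
      unfolding US by (rule Tc[OF Ul2 ul2])
    have 3: "l2norm (\<lambda>n. U j n - u n) = l2norm (\<lambda>n. u n - U j n)"
      unfolding l2norm_def by (simp add: norm_minus_commute)
    have 4: "q * l2norm (\<lambda>n. u n - U j n) \<le> q * (q^j * A / (1 - q))"
      by (rule mult_left_mono[OF uU2 q0])
    have 5: "q * (q^j * A / (1 - q)) = q^Suc j * A / (1 - q)" by simp
    have "l2norm (\<lambda>n. u n - T u n) \<le> q^Suc j * A / (1 - q) + q^Suc j * A / (1 - q)"
      using 1 2[unfolded 3] 4 5 uU2[of "Suc j"] by linarith
    also have "\<dots> = 2 * A / (1 - q) * q^(Suc j)" by simp
    finally show ?thesis .
  qed
  have "l2norm (\<lambda>n. u n - T u n) \<le> 0"
  proof (rule LIMSEQ_le_const)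
    show "(\<lambda>j. 2 * A / (1 - q) * q^(Suc j)) \<longlonglongrightarrow> 0"
      using q0 q1 by (intro tendsto_mult_right_zero LIMSEQ_power_zero[THEN LIMSEQ_Suc]) simp
    show "\<exists>N. \<forall>j\<ge>N. l2norm (\<lambda>n. u n - T u n) \<le> 2 * A / (1 - q) * q^(Suc j)"
      using small by blast
  qed
  from l2norm_zero[OF l2_diff(1)[OF ul2 Tul2] this] have z: "(\<lambda>n. u n - T u n) = (\<lambda>n. 0)" .
  have "u = T u"
  proof
    fix n show "u n = T u n" using fun_cong[OF z, of n] by simp
  qed
  then show ?thesis using ul2 unfolding T_def by blast
qed




lemma l2_dom3:
  assumes "f \<in> l2" "g \<in> l2" "h \<in> l2" "a \<ge> 0" "b \<ge> 0" "c \<ge> 0"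
    and "\<And>n. norm (x n) \<le> a * norm (f n) + b * norm (g n) + c * norm (h n)"
  shows "x \<in> l2" "l2norm x \<le> a * l2norm f + b * l2norm g + c * l2norm h"
proof -
  have fg: "(\<lambda>n. (a * norm (f n) + b * norm (g n)) *\<^sub>R (1::complex)) \<in> l2"
    "l2norm (\<lambda>n. (a * norm (f n) + b * norm (g n)) *\<^sub>R (1::complex)) \<le> a * l2norm f + b * l2norm g"
    using l2_dom[OF assms(1,2,4,5), of "\<lambda>n. (a * norm (f n) + b * norm (g n)) *\<^sub>R (1::complex)"] assms
    by (auto simp: abs_of_nonneg)
  have "x \<in> l2 \<and> l2norm x \<le> 1 * l2norm (\<lambda>n. (a * norm (f n) + b * norm (g n)) *\<^sub>R (1::complex)) + c * l2norm h"
    using l2_dom[OF fg(1) assms(3), of 1 c x] assms by (auto simp: abs_of_nonneg)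
  then show "x \<in> l2" "l2norm x \<le> a * l2norm f + b * l2norm g + c * l2norm h" using fg(2) by auto
qed

lemma v_bound: "\<bar>(x + k1)^2 - (x + k0)^2\<bar> \<le> \<bar>k1 - k0\<bar> * (1 + \<bar>k1 - k0\<bar> + (x + k0)^2)" for x k0 k1 :: real
proof -
  have e: "(x + k1)^2 - (x + k0)^2 = (k1 - k0) * (2 * (x + k0) + (k1 - k0))" by (simp add: power2_eq_square algebra_simps)
  have "\<bar>2 * (x + k0) + (k1 - k0)\<bar> \<le> 2 * \<bar>x + k0\<bar> + \<bar>k1 - k0\<bar>"
  proof -
    have "\<bar>2 * (x + k0)\<bar> = 2 * \<bar>x + k0\<bar>" by (simp only: abs_mult)
    then show ?thesis using abs_triangle_ineq[of "2 * (x + k0)" "k1 - k0"] by linarith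
  qed
  also have "2 * \<bar>x + k0\<bar> \<le> 1 + (x + k0)^2"
  proof -
    have "0 \<le> (\<bar>x + k0\<bar> - 1)^2" by simp
    then show ?thesis by (simp add: power2_eq_square algebra_simps)
  qed
  finally have "\<bar>2 * (x + k0) + (k1 - k0)\<bar> \<le> 1 + \<bar>k1 - k0\<bar> + (x + k0)^2" by linarith
  then show ?thesis unfolding e abs_mult by (intro mult_left_mono) auto
qed

lemma alg_aux: "(d::real) * (1 + d + X) / L * N = d / L * (1 + d) * N + d / L * (X * N)"
  by (cases "L = 0") (simp_all add: field_simps)

context hset begin

lemma vg_bound:
  assumes g: "g \<in> Hdom xi k0"
  shows "(\<lambda>n. (((xi n + k1)^2 - (xi n + k0)^2) / lam) *\<^sub>R g n) \<in> l2"
    "l2norm (\<lambda>n. (((xi n + k1)^2 - (xi n + k0)^2) / lam) *\<^sub>R g n)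
      \<le> \<bar>k1 - k0\<bar> / lam * (1 + \<bar>k1 - k0\<bar>) * l2norm g + \<bar>k1 - k0\<bar> / lam * l2norm (\<lambda>n. (xi n + k0)^2 *\<^sub>R g n)"
proof -
  from g have g2: "g \<in> l2" and gk: "(\<lambda>n. (xi n + k0)^2 *\<^sub>R g n) \<in> l2" unfolding Hdom_iff by auto
  have pt: "norm ((((xi n + k1)^2 - (xi n + k0)^2) / lam) *\<^sub>R g n)
      \<le> \<bar>k1 - k0\<bar> / lam * (1 + \<bar>k1 - k0\<bar>) * norm (g n) + \<bar>k1 - k0\<bar> / lam * norm ((xi n + k0)^2 *\<^sub>R g n)" for n
  proof -
    have "norm ((((xi n + k1)^2 - (xi n + k0)^2) / lam) *\<^sub>R g n) = \<bar>(xi n + k1)^2 - (xi n + k0)^2\<bar> / lam * norm (g n)"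
      using lam_pos by simp
    also have "\<dots> \<le> \<bar>k1 - k0\<bar> * (1 + \<bar>k1 - k0\<bar> + (xi n + k0)^2) / lam * norm (g n)"
      using lam_pos by (intro mult_right_mono divide_right_mono v_bound) auto
    also have "\<dots> = \<bar>k1 - k0\<bar> / lam * (1 + \<bar>k1 - k0\<bar>) * norm (g n) + \<bar>k1 - k0\<bar> / lam * norm ((xi n + k0)^2 *\<^sub>R g n)"
      using lam_pos by (simp only: norm_scaleR abs_power2 alg_aux)
    finally show ?thesis .
  qed
  show "(\<lambda>n. (((xi n + k1)^2 - (xi n + k0)^2) / lam) *\<^sub>R g n) \<in> l2"
    "l2norm (\<lambda>n. (((xi n + k1)^2 - (xi n + k0)^2) / lam) *\<^sub>R g n)
      \<le> \<bar>k1 - k0\<bar> / lam * (1 + \<bar>k1 - k0\<bar>) * l2norm g + \<bar>k1 - k0\<bar> / lam * l2norm (\<lambda>n. (xi n + k0)^2 *\<^sub>R g n)"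
    using l2_dom[OF g2 gk _ _ pt] lam_pos by auto
qed

definition "Mc E B = lam * \<bar>E\<bar> * B + lam + \<bar>eps\<bar> * S * B"

lemma rel_bound:
  assumes G: "Inv E k G" and B0: "B \<ge> 0" and B: "\<And>f. f \<in> l2 \<Longrightarrow> l2norm (G f) \<le> B * l2norm f"
    and u: "u \<in> l2"
  shows "l2norm (\<lambda>n. (xi n + k)^2 *\<^sub>R G u n) \<le> Mc E B * l2norm u"
proof -
  define g where "g = G u"
  have gH: "g \<in> Hdom xi k" unfolding g_def using Inv_D(1)[OF G u] .
  have g2: "g \<in> l2" by (rule Hdom_l2[OF gH])
  have eq: "u n = complex_of_real E * g n - H k g n" for n
    using fun_cong[OF Inv_D(2)[OF G u], of n] unfolding g_def by simp
  have pt: "norm ((xi n + k)^2 *\<^sub>R g n) \<le> (lam * \<bar>E\<bar>) * norm (g n) + lam * norm (u n) + \<bar>eps\<bar> * norm (Wop c g n)" for n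
  proof -
    have "(xi n + k)^2 *\<^sub>R g n = lam *\<^sub>R (complex_of_real E * g n - u n - (eps / lam) *\<^sub>R Wop c g n)"
      unfolding eq Hop_R using lam_pos by (simp add: scaleR_add_right scaleR_diff_right)
    also have "norm \<dots> \<le> lam * (norm (complex_of_real E * g n) + norm (u n) + norm ((eps / lam) *\<^sub>R Wop c g n))"
      using lam_pos by (simp add: norm_triangle_ineq4[THEN order_trans] mult_left_mono norm_diff_triangle_le)
    also have "\<dots> = (lam * \<bar>E\<bar>) * norm (g n) + lam * norm (u n) + \<bar>eps\<bar> * norm (Wop c g n)"
      using lam_pos by (simp add: norm_mult algebra_simps)
    finally show ?thesis .
  qed
  have "l2norm (\<lambda>n. (xi n + k)^2 *\<^sub>R g n) \<le> (lam * \<bar>E\<bar>) * l2norm g + lam * l2norm u + \<bar>eps\<bar> * l2norm (Wop c g)"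
    by (rule l2_dom3(2)[OF g2 u W_l2[OF g2] _ _ _ pt]) (use lam_pos in auto)
  also have "\<dots> \<le> (lam * \<bar>E\<bar>) * (B * l2norm u) + lam * l2norm u + \<bar>eps\<bar> * (S * (B * l2norm u))"
  proof (intro add_mono mult_left_mono order_refl)
    show "l2norm g \<le> B * l2norm u" unfolding g_def by (rule B[OF u])
    show "l2norm (Wop c g) \<le> S * (B * l2norm u)"
      using W_bound[OF g2] mult_left_mono[OF B[OF u] S_nonneg] unfolding g_def by linarith
  qed (use lam_pos in auto)
  also have "\<dots> = Mc E B * l2norm u" unfolding Mc_def by (simp add: algebra_simps)
  finally show ?thesis unfolding g_def .
qed

end



context hset begin

lemma Mc_nonneg: "B \<ge> 0 \<Longrightarrow> Mc E B \<ge> 0"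
  unfolding Mc_def using lam_pos S_nonneg by simp

lemma exist_near:
  assumes G': "Inv E k' G'" and B0: "B \<ge> 0" and B: "\<And>f. f \<in> l2 \<Longrightarrow> l2norm (G' f) \<le> B * l2norm f"
    and small: "\<bar>k - k'\<bar> / lam * ((1 + \<bar>k - k'\<bar>) * B + Mc E B) \<le> 1/2"
  shows "\<exists>G. Inv E k G"
proof -
  define d where "d = \<bar>k - k'\<bar>"
  define q where "q = d / lam * ((1 + d) * B + Mc E B)"
  have q0: "q \<ge> 0" unfolding q_def d_def using lam_pos B0 Mc_nonneg[OF B0] by simp
  have q1: "q \<le> 1/2" using small unfolding q_def d_def .
  define v where "v n = ((xi n + k)^2 - (xi n + k')^2) / lam" for n
  define K where "K u = (\<lambda>n. v n *\<^sub>R G' u n)" for u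
  have Kl2: "K u \<in> l2" if u: "u \<in> l2" for u
    unfolding K_def v_def by (rule vg_bound(1)[OF Inv_D(1)[OF G' u]])
  have Knorm: "l2norm (K u) \<le> q * l2norm u" if u: "u \<in> l2" for u
  proof -
    have "l2norm (K u) \<le> d / lam * (1 + d) * l2norm (G' u) + d / lam * l2norm (\<lambda>n. (xi n + k')^2 *\<^sub>R G' u n)"
      unfolding K_def v_def d_def by (rule vg_bound(2)[OF Inv_D(1)[OF G' u]])
    also have "\<dots> \<le> d / lam * (1 + d) * (B * l2norm u) + d / lam * (Mc E B * l2norm u)"
      using lam_pos B[OF u] rel_bound[OF G' B0 B u] unfolding d_def
      by (intro add_mono mult_left_mono) auto
    also have "\<dots> = q * l2norm u" unfolding q_def by (simp add: algebra_simps add_divide_distrib)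
    finally show ?thesis .
  qed
  have Kdiff: "(\<lambda>n. K u n - K w n) = K (\<lambda>n. u n - w n)" if "u \<in> l2" "w \<in> l2" for u w
    unfolding K_def Inv_diff[OF G' that] by (simp add: scaleR_diff_right)
  have Kc: "l2norm (\<lambda>n. K u n - K w n) \<le> q * l2norm (\<lambda>n. u n - w n)" if "u \<in> l2" "w \<in> l2" for u w
    unfolding Kdiff[OF that] by (rule Knorm[OF l2_diff(1)[OF that]])
  have fp: "\<exists>u\<in>l2. u = (\<lambda>n. f n + K u n)" if f: "f \<in> l2" for f
    by (rule fixpoint[OF Kl2 Kc q0 _ f]) (use q1 in auto)
  have uniq: "u = w" if "u \<in> l2" "w \<in> l2" "u = (\<lambda>n. f n + K u n)" "w = (\<lambda>n. f n + K w n)" for f u w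
  proof -
    have e: "(\<lambda>n. u n - w n) = (\<lambda>n. K u n - K w n)"
    proof
      fix n show "u n - w n = K u n - K w n"
        using fun_cong[OF that(3), of n] fun_cong[OF that(4), of n] by simp
    qed
    have "l2norm (\<lambda>n. u n - w n) \<le> q * l2norm (\<lambda>n. u n - w n)" using Kc[OF that(1,2)] unfolding e[symmetric] .
    then have "(1 - q) * l2norm (\<lambda>n. u n - w n) \<le> 0" by (simp add: algebra_simps)
    moreover have "1 - q > 0" using q1 by simp
    ultimately have "l2norm (\<lambda>n. u n - w n) \<le> 0" by (simp add: mult_le_0_iff)
    from l2norm_zero[OF l2_diff(1)[OF that(1,2)] this] show "u = w"
      by (intro ext) (metis (mono_tags) eq_iff_diff_eq_0)
  qed
  define FP where "FP f = (SOME u. u \<in> l2 \<and> u = (\<lambda>n. f n + K u n))" for f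
  have FP: "FP f \<in> l2" "FP f = (\<lambda>n. f n + K (FP f) n)" if f: "f \<in> l2" for f
    using someI_ex[OF fp[OF f, unfolded Bex_def]] unfolding FP_def by auto
  define G where "G f = G' (FP f)" for f
  have c1: "G f \<in> Hdom xi k" if f: "f \<in> l2" for f
    unfolding G_def by (rule Hdom_indep[OF Inv_D(1)[OF G' FP(1)[OF f]]])
  have c2: "(\<lambda>n. complex_of_real E * G f n - H k (G f) n) = f" if f: "f \<in> l2" for f
  proof
    fix n
    define u where "u = FP f"
    have "complex_of_real E * G f n - H k (G f) n = (complex_of_real E * G' u n - H k' (G' u) n) - v n *\<^sub>R G' u n"
      unfolding G_def u_def v_def by (subst Hop_shiftk[of k _ _ k']) simp
    also have "\<dots> = u n - K u n" using fun_cong[OF Inv_D(2)[OF G' FP(1)[OF f]], of n] unfolding u_def K_def by simp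
    also have "\<dots> = f n" using fun_cong[OF FP(2)[OF f], of n] unfolding u_def by simp
    finally show "complex_of_real E * G f n - H k (G f) n = f n" .
  qed
  have c3: "G (\<lambda>n. complex_of_real E * h n - H k h n) = h" if h: "h \<in> Hdom xi k" for h
  proof -
    define f where "f = (\<lambda>n. complex_of_real E * h n - H k h n)"
    have f: "f \<in> l2" unfolding f_def by (rule EmH_l2[OF h])
    have hk': "h \<in> Hdom xi k'" by (rule Hdom_indep[OF h])
    define u0 where "u0 = (\<lambda>n. complex_of_real E * h n - H k' h n)"
    have u0: "u0 \<in> l2" unfolding u0_def by (rule EmH_l2[OF hk'])
    have Gu0: "G' u0 = h" unfolding u0_def by (rule Inv_D(3)[OF G' hk'])
    have u0fix: "u0 = (\<lambda>n. f n + K u0 n)"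
    proof
      fix n show "u0 n = f n + K u0 n"
        unfolding u0_def f_def K_def Gu0[unfolded u0_def] v_def
        by (subst Hop_shiftk[of k _ _ k']) simp
    qed
    have "FP f = u0" by (rule uniq[OF FP(1)[OF f] u0 FP(2)[OF f] u0fix])
    then show ?thesis unfolding G_def f_def[symmetric] using Gu0 by simp
  qed
  have c4: "l2norm (G f) \<le> (2 * B) * l2norm f" if f: "f \<in> l2" for f
  proof -
    define u where "u = FP f"
    have u: "u \<in> l2" unfolding u_def by (rule FP(1)[OF f])
    have "l2norm u \<le> l2norm f + l2norm (K u)"
      using l2_add(2)[OF f Kl2[OF u]] FP(2)[OF f] unfolding u_def by simp
    also have "\<dots> \<le> l2norm f + q * l2norm u" using Knorm[OF u] by simp
    also have "\<dots> \<le> l2norm f + 1/2 * l2norm u" using mult_right_mono[OF q1 l2norm_nonneg[of u]]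
      by simp
    finally have "l2norm u \<le> 2 * l2norm f" by simp
    have "l2norm (G f) \<le> B * l2norm u" unfolding G_def u_def by (rule B[OF FP(1)[OF f]])
    also have "\<dots> \<le> B * (2 * l2norm f)" by (rule mult_left_mono[OF \<open>l2norm u \<le> 2 * l2norm f\<close> B0])
    finally show ?thesis by simp
  qed
  have "Inv E k G" unfolding is_inverse_of_EmH_def using c1 c2 c3 c4 by blast
  then show ?thesis by blast
qed

lemma bound_near:
  assumes G': "Inv E k' G'" and B0: "B \<ge> 0" and B: "\<And>f. f \<in> l2 \<Longrightarrow> l2norm (G' f) \<le> B * l2norm f"
    and G: "Inv E k G"
  shows "norm (G (delta n) m - G' (delta n) m)
     \<le> B * (\<bar>k' - k\<bar> / lam * (1 + \<bar>k' - k\<bar>) * l2norm (G (delta n)) + \<bar>k' - k\<bar> / lam * l2norm (\<lambda>j. (xi j + k)^2 *\<^sub>R G (delta n) j))"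
proof -
  define g where "g = G (delta n)"
  have g: "g \<in> Hdom xi k" unfolding g_def by (rule Inv_D(1)[OF G delta_l2])
  have gk': "g \<in> Hdom xi k'" by (rule Hdom_indep[OF g])
  define w where "w = (\<lambda>j. (((xi j + k')^2 - (xi j + k)^2) / lam) *\<^sub>R g j)"
  have w: "w \<in> l2" unfolding w_def by (rule vg_bound(1)[OF g])
  have wb: "l2norm w \<le> \<bar>k' - k\<bar> / lam * (1 + \<bar>k' - k\<bar>) * l2norm g + \<bar>k' - k\<bar> / lam * l2norm (\<lambda>j. (xi j + k)^2 *\<^sub>R g j)"
    unfolding w_def by (rule vg_bound(2)[OF g])
  have e1: "(\<lambda>j. complex_of_real E * g j - H k' g j) = (\<lambda>j. delta n j - w j)"
  proof
    fix j
    have "complex_of_real E * g j - H k' g j = (complex_of_real E * g j - H k g j) - w j"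
      unfolding w_def by (subst Hop_shiftk[of k' _ _ k]) simp
    also have "\<dots> = delta n j - w j" using fun_cong[OF Inv_D(2)[OF G delta_l2[of n]], of j] unfolding g_def by simp
    finally show "complex_of_real E * g j - H k' g j = delta n j - w j" .
  qed
  have "g = G' (\<lambda>j. delta n j - w j)" using Inv_D(3)[OF G' gk'] unfolding e1 by simp
  also have "\<dots> = (\<lambda>j. G' (delta n) j - G' w j)" by (rule Inv_diff[OF G' delta_l2 w])
  finally have "g m - G' (delta n) m = - G' w m" by simp
  then have "norm (g m - G' (delta n) m) = norm (G' w m)" by simp
  also have "\<dots> \<le> l2norm (G' w)" by (rule norm_le_l2norm[OF Hdom_l2[OF Inv_D(1)[OF G' w]]])
  also have "\<dots> \<le> B * l2norm w" by (rule B[OF w])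
  also have "\<dots> \<le> B * (\<bar>k' - k\<bar> / lam * (1 + \<bar>k' - k\<bar>) * l2norm g + \<bar>k' - k\<bar> / lam * l2norm (\<lambda>j. (xi j + k)^2 *\<^sub>R g j))"
    by (rule mult_left_mono[OF wb B0])
  finally show ?thesis unfolding g_def .
qed

end



context hset begin

lemma dense_seq:
  assumes dense: "closure (range xi) = UNIV"
  shows "\<exists>p. (\<lambda>j. \<bar>k - (k0 + xi (p j))\<bar>) \<longlonglongrightarrow> 0"
proof -
  have "\<forall>j. \<exists>p. \<bar>k - (k0 + xi p)\<bar> < inverse (real (Suc j))"
  proof
    fix j
    have "k - k0 \<in> closure (range xi)" using dense by simp
    then obtain y where "y \<in> range xi" "dist y (k - k0) < inverse (real (Suc j))"
      unfolding closure_approachable by (meson inverse_positive_iff_positive of_nat_0_less_iff zero_less_Suc)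
    then obtain x where x: "\<bar>xi x - (k - k0)\<bar> < inverse (real (Suc j))" by (auto simp: dist_real_def)
    have "\<bar>k - (k0 + xi x)\<bar> = \<bar>xi x - (k - k0)\<bar>" by arith
    then show "\<exists>p. \<bar>k - (k0 + xi p)\<bar> < inverse (real (Suc j))" using x by metis
  qed
  then obtain p where p: "\<And>j. \<bar>k - (k0 + xi (p j))\<bar> < inverse (real (Suc j))" by metis
  have "(\<lambda>j. k - (k0 + xi (p j))) \<longlonglongrightarrow> 0"
  proof (rule Lim_null_comparison[OF _ LIMSEQ_inverse_real_of_nat])
    show "\<forall>\<^sub>F j in sequentially. norm (k - (k0 + xi (p j))) \<le> inverse (real (Suc j))"
      by (intro always_eventually allI, unfold real_norm_def, rule less_imp_le[OF p])
  qed
  then show ?thesis using tendsto_rabs_zero by blast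
qed

lemma part_a1:
  assumes dense: "closure (range xi) = UNIV" and G0: "Inv E k0 G0"
  shows "\<exists>G. Inv E k G"
proof -
  obtain B where B0: "B \<ge> 0" and B: "\<And>f. f \<in> l2 \<Longrightarrow> l2norm (G0 f) \<le> B * l2norm f"
    using Inv_bound_nonneg[OF G0] by blast
  obtain p where p: "(\<lambda>j. \<bar>k - (k0 + xi (p j))\<bar>) \<longlonglongrightarrow> 0" using dense_seq[OF dense] by blast
  have "(\<lambda>j. \<bar>k - (k0 + xi (p j))\<bar> / lam * ((1 + \<bar>k - (k0 + xi (p j))\<bar>) * B + Mc E B))
      \<longlonglongrightarrow> 0 / lam * ((1 + 0) * B + Mc E B)"
    using lam_pos by (intro tendsto_intros p) simp_all
  then have "eventually (\<lambda>j. \<bar>k - (k0 + xi (p j))\<bar> / lam * ((1 + \<bar>k - (k0 + xi (p j))\<bar>) * B + Mc E B) < 1/2) sequentially"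
    by (rule order_tendstoD(2)) simp
  then obtain j where j: "\<bar>k - (k0 + xi (p j))\<bar> / lam * ((1 + \<bar>k - (k0 + xi (p j))\<bar>) * B + Mc E B) < 1/2"
    using eventually_sequentially by auto
  show ?thesis
    by (rule exist_near[OF Inv_shift(1)[OF G0 B, where p="p j"] B0 Inv_shift(2)[OF G0 B, where p="p j"]])
       (use j in auto)
qed

lemma part_a2:
  assumes dense: "closure (range xi) = UNIV" and G0: "Inv E k0 G0"
    and b0: "\<And>m n. norm (G0 (delta n) m) \<le> rho (nrm (m - n))"
    and G: "Inv E k G"
  shows "norm (G (delta n) m) \<le> rho (nrm (m - n))"
proof -
  obtain B where B0: "B \<ge> 0" and B: "\<And>f. f \<in> l2 \<Longrightarrow> l2norm (G0 f) \<le> B * l2norm f"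
    using Inv_bound_nonneg[OF G0] by blast
  obtain p where p: "(\<lambda>j. \<bar>k - (k0 + xi (p j))\<bar>) \<longlonglongrightarrow> 0" using dense_seq[OF dense] by blast
  define a where "a = l2norm (G (delta n))"
  define b where "b = l2norm (\<lambda>j. (xi j + k)^2 *\<^sub>R G (delta n) j)"
  define e where "e j = \<bar>k0 + xi (p j) - k\<bar>" for j
  have e: "e \<longlonglongrightarrow> 0" using p unfolding e_def by (simp add: abs_minus_commute)
  define r where "r j = rho (nrm (m - n)) + B * (e j / lam * (1 + e j) * a + e j / lam * b)" for j
  have r: "r \<longlonglongrightarrow> rho (nrm (m - n)) + B * (0 / lam * (1 + 0) * a + 0 / lam * b)"
    unfolding r_def using lam_pos by (intro tendsto_intros e) simp_all
  show ?thesis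
  proof (rule LIMSEQ_le_const[OF r[simplified]], intro exI allI impI)
    fix j
    define G' where "G' = (\<lambda>f. shift (p j) (G0 (shift (- p j) f)))"
    have G': "Inv E (k0 + xi (p j)) G'" unfolding G'_def by (rule Inv_shift(1)[OF G0 B])
    have B': "\<And>f. f \<in> l2 \<Longrightarrow> l2norm (G' f) \<le> B * l2norm f" unfolding G'_def by (rule Inv_shift(2)[OF G0 B])
    have near: "norm (G (delta n) m - G' (delta n) m) \<le> B * (e j / lam * (1 + e j) * a + e j / lam * b)"
      using bound_near[OF G' B0 B' G, of n m] unfolding a_def b_def e_def .
    have "G' (delta n) m = G0 (delta (n + p j)) (m + p j)" unfolding G'_def by (rule Inv_shift_delta)
    then have "norm (G' (delta n) m) \<le> rho (nrm (m - n))" using b0[where m="m + p j" and n="n + p j"] by simp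
    then show "norm (G (delta n) m) \<le> r j" unfolding r_def
      using near norm_triangle_ineq2[of "G (delta n) m" "G' (delta n) m"] by linarith
  qed
qed

end

lemma generator:
  fixes xi :: "'a::ab_group_add \<Rightarrow> real"
  assumes xi_add: "\<And>m n. xi (m + n) = xi m + xi n" and a: "a > 0"
    and low: "\<And>m. m \<noteq> 0 \<Longrightarrow> a \<le> \<bar>xi m\<bar>"
    and app: "\<And>\<epsilon>. \<epsilon> > 0 \<Longrightarrow> \<exists>m. m \<noteq> 0 \<and> \<bar>xi m\<bar> < a + \<epsilon>"
  shows "\<exists>g. xi g = a"
proof -
  have xi0: "xi 0 = 0" using xi_add[of 0 0] by simp
  have xim: "xi (- m) = - xi m" for m using xi_add[of m "-m"] xi0 by simp
  have absr: "\<exists>e. xi e = \<bar>xi m\<bar>" for m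
  proof (cases "xi m \<ge> 0")
    case True then have "xi m = \<bar>xi m\<bar>" by simp
    then show ?thesis by blast
  next
    case False then have "xi (- m) = \<bar>xi m\<bar>" using xim[of m] by simp
    then show ?thesis by blast
  qed
  obtain m1 where m1: "m1 \<noteq> 0" "\<bar>xi m1\<bar> < a + a" using app[OF a] by blast
  show ?thesis
  proof (cases "\<bar>xi m1\<bar> = a")
    case True then show ?thesis using absr[of m1] by auto
  next
    case False
    then have gt: "a < \<bar>xi m1\<bar>" using low[OF m1(1)] by simp
    have "\<bar>xi m1\<bar> - a > 0" using gt by simp
    from app[OF this] obtain m2 where m2: "m2 \<noteq> 0" "\<bar>xi m2\<bar> < a + (\<bar>xi m1\<bar> - a)" by blast
    obtain e1 where e1: "xi e1 = \<bar>xi m1\<bar>" using absr by blast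
    obtain e2 where e2: "xi e2 = \<bar>xi m2\<bar>" using absr by blast
    have l2: "a \<le> \<bar>xi m2\<bar>" by (rule low[OF m2(1)])
    have xq: "xi (e1 - e2) = \<bar>xi m1\<bar> - \<bar>xi m2\<bar>" using xi_add[of e1 "-e2"] xim[of e2] e1 e2 by simp
    have pos: "xi (e1 - e2) > 0" "xi (e1 - e2) < a" using xq m2(2) l2 m1(2) by auto
    then have "e1 - e2 \<noteq> 0" using xi0 by auto
    from low[OF this] pos show ?thesis by simp
  qed
qed

lemma int_multiple:
  fixes xi :: "'a::ab_group_add \<Rightarrow> real"
  assumes xi_add: "\<And>m n. xi (m + n) = xi m + xi n" and g: "xi g = a"
  shows "\<exists>p. xi p = of_int j * a"
proof -
  have xi0: "xi 0 = 0" using xi_add[of 0 0] by simp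
  have xim: "xi (- m) = - xi m" for m using xi_add[of m "-m"] xi0 by simp
  have nat: "\<exists>p. xi p = of_nat n * a" for n
  proof (induction n)
    case 0 then show ?case using xi0 by auto
  next
    case (Suc n)
    then obtain p where "xi p = of_nat n * a" by blast
    then have "xi (p + g) = of_nat (Suc n) * a" using xi_add g by (simp add: algebra_simps)
    then show ?case by blast
  qed
  show ?thesis
  proof (cases "j \<ge> 0")
    case True
    then obtain n where "j = int n" using nonneg_int_cases by blast
    then show ?thesis using nat[of n] by simp
  next
    case False
    define n where "n = nat (- j)"
    have n: "j = - int n" unfolding n_def using False by simp
    obtain p where "xi p = of_nat n * a" using nat by blast
    then have "xi (- p) = of_int j * a" using xim n by simp
    then show ?thesis by blast
  qed
qed




theorem mainTheorem9:
  fixes nrm :: "'a::ab_group_add \<Rightarrow> real"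
    and xi :: "'a \<Rightarrow> real"
    and c :: "'a \<Rightarrow> complex"
    and C \<nu> \<kappa>0 \<alpha>0 lam eps E :: real
    and rho :: "real \<Rightarrow> real"
  assumes nrm_nonneg: "\<And>m. nrm m \<ge> 0"
    and nrm_zero: "\<And>m. nrm m = 0 \<longleftrightarrow> m = 0"
    and nrm_triangle: "\<And>m n. nrm (m + n) \<le> nrm m + nrm n"
    and C_gt: "C > 1" and nu_gt: "\<nu> > 1"
    and balls: "\<And>R. R \<ge> 1 \<Longrightarrow> finite {m. nrm m \<le> R} \<and> real (card {m. nrm m \<le> R}) \<le> C * R powr \<nu>"
    and xi_add: "\<And>m n. xi (m + n) = xi m + xi n"
    and kappa0: "0 < \<kappa>0" "\<kappa>0 \<le> 1"
    and alpha0: "0 < \<alpha>0" "\<alpha>0 \<le> 1"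
    and c_decay: "\<And>n. norm (c n) \<le> exp (- \<kappa>0 * nrm n powr \<alpha>0)"
    and c_sym: "\<And>n. c (- n) = cnj (c n)"
    and lam_pos: "lam > 0"
    and rho_nonneg: "\<And>x. x \<ge> 0 \<Longrightarrow> rho x \<ge> 0"
    and rho_l2: "(\<lambda>n. (rho (nrm n))^2) summable_on UNIV"
  shows
   "(closure (range xi) = UNIV \<longrightarrow>
      (\<forall>k0. EmH_invertible lam eps c xi E k0 \<longrightarrow> (\<forall>k. EmH_invertible lam eps c xi E k)) \<and>
      (\<forall>k0. (\<exists>G. is_inverse_of_EmH lam eps c xi E k0 G \<and> inv_bound nrm rho G) \<longrightarrow>
         (\<forall>k G. is_inverse_of_EmH lam eps c xi E k G \<longrightarrow> inv_bound nrm rho G)))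
    \<and>
    (\<forall>(\<tau>0::ereal) m0. \<tau>0 > 0 \<and> 2 * \<tau>0 = (INF m\<in>{m. m \<noteq> 0}. ereal \<bar>xi m\<bar>) \<longrightarrow>
      (let km0 = - xi m0 / 2;
           J = {k. ereal km0 - \<tau>0 < ereal k \<and> ereal k \<le> ereal km0 + \<tau>0}
       in (\<forall>k\<in>J. EmH_invertible lam eps c xi E k) \<longrightarrow>
            (\<forall>k. EmH_invertible lam eps c xi E k) \<and>
            ((\<forall>k\<in>J. \<forall>G. is_inverse_of_EmH lam eps c xi E k G \<longrightarrow> inv_bound nrm rho G) \<longrightarrow>
               (\<forall>k G. is_inverse_of_EmH lam eps c xi E k G \<longrightarrow> inv_bound nrm rho G))))"
proof -
  have c1: "norm (c d) \<le> 1" for d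
  proof -
    have "0 \<le> \<kappa>0 * nrm d powr \<alpha>0" using kappa0 by simp
    then have "exp (- \<kappa>0 * nrm d powr \<alpha>0) \<le> 1" by simp
    then show ?thesis using c_decay[of d] by linarith
  qed
  have cs: "(\<lambda>d. norm (c d)) summable_on UNIV"
    by (rule c_l1[OF nrm_nonneg balls kappa0(1) alpha0(1) C_gt c_decay])
  interpret hset lam eps c xi
    by unfold_locales (use lam_pos cs c1 xi_add in auto)
  have partA: "closure (range xi) = UNIV \<longrightarrow>
      (\<forall>k0. EmH_invertible lam eps c xi E k0 \<longrightarrow> (\<forall>k. EmH_invertible lam eps c xi E k)) \<and>
      (\<forall>k0. (\<exists>G. is_inverse_of_EmH lam eps c xi E k0 G \<and> inv_bound nrm rho G) \<longrightarrow>
         (\<forall>k G. is_inverse_of_EmH lam eps c xi E k G \<longrightarrow> inv_bound nrm rho G))"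
  proof (intro impI conjI allI)
    assume dense: "closure (range xi) = UNIV"
    fix k0 k
    assume "EmH_invertible lam eps c xi E k0"
    then obtain G0 where G0: "Inv E k0 G0" unfolding EmH_invertible_def by blast
    show "EmH_invertible lam eps c xi E k" unfolding EmH_invertible_def by (rule part_a1[OF dense G0])
  next
    assume dense: "closure (range xi) = UNIV"
    fix k0 k G
    assume "\<exists>G. is_inverse_of_EmH lam eps c xi E k0 G \<and> inv_bound nrm rho G"
    then obtain G0 where G0: "Inv E k0 G0" and b0: "inv_bound nrm rho G0" by blast
    assume G: "Inv E k G"
    show "inv_bound nrm rho G" unfolding inv_bound_def
    proof (intro allI)
      fix m n
      show "norm (G (delta n) m) \<le> rho (nrm (m - n))"
        by (rule part_a2[OF dense G0 _ G]) (use b0 in \<open>auto simp: inv_bound_def\<close>)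
    qed
  qed
  have partB: "\<forall>(\<tau>0::ereal) m0. \<tau>0 > 0 \<and> 2 * \<tau>0 = (INF m\<in>{m. m \<noteq> 0}. ereal \<bar>xi m\<bar>) \<longrightarrow>
      (let km0 = - xi m0 / 2;
           J = {k. ereal km0 - \<tau>0 < ereal k \<and> ereal k \<le> ereal km0 + \<tau>0}
       in (\<forall>k\<in>J. EmH_invertible lam eps c xi E k) \<longrightarrow>
            (\<forall>k. EmH_invertible lam eps c xi E k) \<and>
            ((\<forall>k\<in>J. \<forall>G. is_inverse_of_EmH lam eps c xi E k G \<longrightarrow> inv_bound nrm rho G) \<longrightarrow>
               (\<forall>k G. is_inverse_of_EmH lam eps c xi E k G \<longrightarrow> inv_bound nrm rho G)))"
  proof (intro allI impI)
    fix \<tau>0 :: ereal and m0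
    assume h: "\<tau>0 > 0 \<and> 2 * \<tau>0 = (INF m\<in>{m. m \<noteq> 0}. ereal \<bar>xi m\<bar>)"
    define km0 where "km0 = - xi m0 / 2"
    define J where "J = {k. ereal km0 - \<tau>0 < ereal k \<and> ereal k \<le> ereal km0 + \<tau>0}"
    have key: "\<exists>p. k + xi p \<in> J" for k
    proof (cases "\<tau>0 = \<infinity>")
      case True
      then have "k \<in> J" unfolding J_def by simp
      then show ?thesis using xi0 by (intro exI[of _ 0]) simp
    next
      case False
      then obtain t where t: "\<tau>0 = ereal t" using h by (cases \<tau>0) auto
      have t0: "t > 0" using h t by simp
      have inf: "(INF m\<in>{m. m \<noteq> 0}. ereal \<bar>xi m\<bar>) = ereal (2 * t)" using h t by simp
      have low: "2 * t \<le> \<bar>xi m\<bar>" if "m \<noteq> 0" for m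
      proof -
        have "(INF m\<in>{m. m \<noteq> 0}. ereal \<bar>xi m\<bar>) \<le> ereal \<bar>xi m\<bar>" by (rule INF_lower) (use that in simp)
        then show ?thesis unfolding inf by simp
      qed
      have app: "\<exists>m. m \<noteq> 0 \<and> \<bar>xi m\<bar> < 2 * t + \<epsilon>" if "\<epsilon> > 0" for \<epsilon>
      proof -
        have "(INF m\<in>{m. m \<noteq> 0}. ereal \<bar>xi m\<bar>) < ereal (2 * t + \<epsilon>)" unfolding inf using that by simp
        then show ?thesis unfolding INF_less_iff by auto
      qed
      obtain g where g: "xi g = 2 * t" using generator[OF xi_add _ low app] t0 by auto
      define j where "j = \<lfloor>(km0 + t - k) / (2 * t)\<rfloor>"
      obtain p where p: "xi p = of_int j * (2 * t)" using int_multiple[OF xi_add g] by blast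
      have j1: "of_int j \<le> (km0 + t - k) / (2 * t)" unfolding j_def by (rule of_int_floor_le)
      have j2: "(km0 + t - k) / (2 * t) < of_int j + 1" unfolding j_def by (rule real_of_int_floor_add_one_gt)
      have a1: "of_int j * (2 * t) \<le> km0 + t - k" using j1 t0 by (simp add: le_divide_eq)
      have a2: "km0 + t - k < (of_int j + 1) * (2 * t)" using j2 t0 by (simp add: divide_less_eq)
      have "k + xi p \<in> J" unfolding J_def t using a1 a2 p by (simp add: algebra_simps)
      then show ?thesis by blast
    qed
    have main: "(\<forall>k\<in>J. EmH_invertible lam eps c xi E k) \<longrightarrow>
            (\<forall>k. EmH_invertible lam eps c xi E k) \<and>
            ((\<forall>k\<in>J. \<forall>G. is_inverse_of_EmH lam eps c xi E k G \<longrightarrow> inv_bound nrm rho G) \<longrightarrow>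
               (\<forall>k G. is_inverse_of_EmH lam eps c xi E k G \<longrightarrow> inv_bound nrm rho G))"
    proof (intro impI conjI allI)
      assume hJ: "\<forall>k\<in>J. EmH_invertible lam eps c xi E k"
      fix k
      obtain p where p: "k + xi p \<in> J" using key by blast
      then obtain G1 where G1: "Inv E (k + xi p) G1" using hJ unfolding EmH_invertible_def by blast
      obtain B where B0: "B \<ge> 0" and B: "\<And>f. f \<in> l2 \<Longrightarrow> l2norm (G1 f) \<le> B * l2norm f"
        using Inv_bound_nonneg[OF G1] by blast
      have "Inv E (k + xi p + xi (- p)) (\<lambda>f. shift (- p) (G1 (shift (- (- p)) f)))"
        by (rule Inv_shift(1)[OF G1 B])
      then show "EmH_invertible lam eps c xi E k" unfolding EmH_invertible_def xi_minus by auto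
    next
      fix k G
      assume hB: "\<forall>k\<in>J. \<forall>G. is_inverse_of_EmH lam eps c xi E k G \<longrightarrow> inv_bound nrm rho G"
      assume G: "Inv E k G"
      obtain p where p: "k + xi p \<in> J" using key by blast
      obtain B where B0: "B \<ge> 0" and B: "\<And>f. f \<in> l2 \<Longrightarrow> l2norm (G f) \<le> B * l2norm f"
        using Inv_bound_nonneg[OF G] by blast
      have "Inv E (k + xi p) (\<lambda>f. shift p (G (shift (- p) f)))" by (rule Inv_shift(1)[OF G B])
      then have bp: "inv_bound nrm rho (\<lambda>f. shift p (G (shift (- p) f)))" using hB p by blast
      show "inv_bound nrm rho G" unfolding inv_bound_def
      proof (intro allI)
        fix m n
        have "norm ((\<lambda>f. shift p (G (shift (- p) f))) (delta (n - p)) (m - p)) \<le> rho (nrm ((m - p) - (n - p)))"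
          using bp unfolding inv_bound_def by blast
        then show "norm (G (delta n) m) \<le> rho (nrm (m - n))" unfolding Inv_shift_delta by simp
      qed
    qed
    then show "let km0 = - xi m0 / 2;
           J = {k. ereal km0 - \<tau>0 < ereal k \<and> ereal k \<le> ereal km0 + \<tau>0}
       in (\<forall>k\<in>J. EmH_invertible lam eps c xi E k) \<longrightarrow>
            (\<forall>k. EmH_invertible lam eps c xi E k) \<and>
            ((\<forall>k\<in>J. \<forall>G. is_inverse_of_EmH lam eps c xi E k G \<longrightarrow> inv_bound nrm rho G) \<longrightarrow>
               (\<forall>k G. is_inverse_of_EmH lam eps c xi E k G \<longrightarrow> inv_bound nrm rho G))"
      unfolding Let_def J_def km0_def .
  qed
  show ?thesis using partA partB by blast
qed


end
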